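(* Let $\{\varphi_n\}$ be a generalized Riesz system in a Hilbert space $\mathcal H$ with constructing pair $(\{e_n\},T)$, and put $\psi^T_n=(T^{-1})^*e_n$, $n\ge0$. Then $(\{\varphi_n\},\{\psi^T_n\})$ is a $(D(T^* ),D(T^{-1}))$-quasi basis, and $T=\big(T_{e,\psi^T}|_{D(T^{-1})}\big)^{-1}$, $(T^{-1})^*=\big(T_{e,\varphi}|_{D(T^* )}\big)^{-1}$.
   Context: A sequence $\{\varphi_n\}$ is a generalized Riesz system if there exist an ONB $\{e_n\}$ and a densely defined closed operator $T$ with densely defined inverse such that $e_n\in D(T)\cap D((T^{-1})^* )$ and $Te_n=\varphi_n$ for all $n$; $(\{e_n\},T)$ is a constructing pair. Inner product linear in the first argument. For a sequence $\{\chi_n\}$, $D(\chi)=\{x:\sum_n|\langle x,\chi_n\rangle|^2<\infty\}$ and $D_\chi$ is its linear span; $T_{e,\chi}$ is the operator with domain $D(\chi)$, $T_{e,\chi}x=\sum_n\langle x,\chi_n\rangle e_n$. For biorthogonal sequences $\{\varphi_n\},\{\psi_n\}$ (i.e. $\langle\varphi_n,\psi_m\rangle=\delta_{nm}$) and dense subspaces $\mathcal D,\mathcal E$ with $D_\psi\subseteq\mathcal D\subseteq D(\varphi)$, $D_\varphi\subseteq\mathcal E\subseteq D(\psi)$, the pair is a $(\mathcal D,\mathcal E)$-quasi basis if $\sum_k\langle x,\varphi_k\rangle\langle\psi_k,y\rangle=\langle x,y\rangle$ for all $x\in\mathcal D$, $y\in\mathcal E$. *)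

theory Defs
  imports "HOL-Analysis.Analysis"
begin

class chilbert = banach +
  fixes cscale :: "complex \<Rightarrow> 'a \<Rightarrow> 'a"
    and cinner :: "'a \<Rightarrow> 'a \<Rightarrow> complex"
  assumes cscale_add_right: "cscale a (x + y) = cscale a x + cscale a y"
    and cscale_add_left: "cscale (a + b) x = cscale a x + cscale b x"
    and cscale_cscale: "cscale a (cscale b x) = cscale (a * b) x"
    and cscale_one: "cscale 1 x = x"
    and scaleR_cscale: "scaleR r x = cscale (complex_of_real r) x"
    and cinner_add_left: "cinner (x + y) z = cinner x z + cinner y z"
    and cinner_cscale_left: "cinner (cscale a x) y = a * cinner x y"
    and cinner_commute: "cinner y x = cnj (cinner x y)"
    and cinner_self: "cinner x x = complex_of_real ((norm x)\<^sup>2)"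

text \<open>A (possibly unbounded) operator on H is represented by its graph, a
relation G on H.\<close>

definition csubspace :: "'a::chilbert set \<Rightarrow> bool" where
  "csubspace S \<longleftrightarrow> 0 \<in> S \<and> (\<forall>x\<in>S. \<forall>y\<in>S. x + y \<in> S) \<and> (\<forall>a x. x \<in> S \<longrightarrow> cscale a x \<in> S)"

definition cspan :: "'a::chilbert set \<Rightarrow> 'a set" where
  "cspan A = {x. \<exists>F c. finite F \<and> F \<subseteq> A \<and> x = (\<Sum>a\<in>F. cscale (c a) a)}"

definition lin_op :: "('a::chilbert \<times> 'a) set \<Rightarrow> bool" where
  "lin_op G \<longleftrightarrow> (0, 0) \<in> G
     \<and> (\<forall>x y u v. (x, y) \<in> G \<longrightarrow> (u, v) \<in> G \<longrightarrow> (x + u, y + v) \<in> G)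
     \<and> (\<forall>a x y. (x, y) \<in> G \<longrightarrow> (cscale a x, cscale a y) \<in> G)
     \<and> (\<forall>x y z. (x, y) \<in> G \<longrightarrow> (x, z) \<in> G \<longrightarrow> y = z)"

definition dom_op :: "('a \<times> 'a) set \<Rightarrow> 'a set" where
  "dom_op G = Domain G"

definition densely_defined :: "('a::chilbert \<times> 'a) set \<Rightarrow> bool" where
  "densely_defined G \<longleftrightarrow> closure (dom_op G) = UNIV"

definition closed_op :: "('a::chilbert \<times> 'a) set \<Rightarrow> bool" where
  "closed_op G \<longleftrightarrow> closed G"

text \<open>Inverse operator: converse graph (an operator iff G is injective).\<close>
definition inv_op :: "('a \<times> 'a) set \<Rightarrow> ('a \<times> 'a) set" where
  "inv_op G = converse G"

definition injective_op :: "('a::chilbert \<times> 'a) set \<Rightarrow> bool" where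
  "injective_op G \<longleftrightarrow> (\<forall>x y z. (x, z) \<in> G \<longrightarrow> (y, z) \<in> G \<longrightarrow> x = y)"

definition adj_op :: "('a::chilbert \<times> 'a) set \<Rightarrow> ('a \<times> 'a) set" where
  "adj_op G = {(y, z). \<forall>x w. (x, w) \<in> G \<longrightarrow> cinner w y = cinner x z}"

definition restrict_op :: "('a \<times> 'a) set \<Rightarrow> 'a set \<Rightarrow> ('a \<times> 'a) set" where
  "restrict_op G A = {(x, y). (x, y) \<in> G \<and> x \<in> A}"

definition ONB :: "(nat \<Rightarrow> 'a::chilbert) \<Rightarrow> bool" where
  "ONB e \<longleftrightarrow> (\<forall>n m. cinner (e n) (e m) = (if n = m then 1 else 0))
     \<and> (\<forall>x. (\<forall>n. cinner x (e n) = 0) \<longrightarrow> x = 0)"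

definition constructing_pair :: "(nat \<Rightarrow> 'a::chilbert) \<Rightarrow> ('a \<times> 'a) set \<Rightarrow> (nat \<Rightarrow> 'a) \<Rightarrow> bool" where
  "constructing_pair e T \<phi> \<longleftrightarrow> ONB e \<and> lin_op T \<and> densely_defined T \<and> closed_op T
     \<and> injective_op T \<and> densely_defined (inv_op T)
     \<and> (\<forall>n. e n \<in> dom_op T \<inter> dom_op (adj_op (inv_op T)) \<and> (e n, \<phi> n) \<in> T)"

definition gen_Riesz_system :: "(nat \<Rightarrow> 'a::chilbert) \<Rightarrow> bool" where
  "gen_Riesz_system \<phi> \<longleftrightarrow> (\<exists>e T. constructing_pair e T \<phi>)"

definition Dseq :: "(nat \<Rightarrow> 'a::chilbert) \<Rightarrow> 'a set" where
  "Dseq xs = {x. summable (\<lambda>n. (cmod (cinner x (xs n)))\<^sup>2)}"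

definition Dspan :: "(nat \<Rightarrow> 'a::chilbert) \<Rightarrow> 'a set" where
  "Dspan xs = cspan (range xs)"

definition T_op :: "(nat \<Rightarrow> 'a::chilbert) \<Rightarrow> (nat \<Rightarrow> 'a) \<Rightarrow> ('a \<times> 'a) set" where
  "T_op e xs = {(x, \<Sum>n. cscale (cinner x (xs n)) (e n)) | x. x \<in> Dseq xs}"

definition biorthogonal :: "(nat \<Rightarrow> 'a::chilbert) \<Rightarrow> (nat \<Rightarrow> 'a) \<Rightarrow> bool" where
  "biorthogonal \<phi> \<psi> \<longleftrightarrow> (\<forall>n m. cinner (\<phi> n) (\<psi> m) = (if n = m then 1 else 0))"

definition dense_csubspace :: "'a::chilbert set \<Rightarrow> bool" where
  "dense_csubspace S \<longleftrightarrow> csubspace S \<and> closure S = UNIV"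

definition quasi_basis :: "'a::chilbert set \<Rightarrow> 'a set \<Rightarrow> (nat \<Rightarrow> 'a) \<Rightarrow> (nat \<Rightarrow> 'a) \<Rightarrow> bool" where
  "quasi_basis \<D> \<E> \<phi> \<psi> \<longleftrightarrow> biorthogonal \<phi> \<psi>
     \<and> dense_csubspace \<D> \<and> dense_csubspace \<E>
     \<and> Dspan \<psi> \<subseteq> \<D> \<and> \<D> \<subseteq> Dseq \<phi>
     \<and> Dspan \<phi> \<subseteq> \<E> \<and> \<E> \<subseteq> Dseq \<psi>
     \<and> (\<forall>x\<in>\<D>. \<forall>y\<in>\<E>. (\<lambda>k. cinner x (\<phi> k) * cinner (\<psi> k) y) sums cinner x y)"

end

theory Submission
  imports Defs
begin



lemma cscale_zero_left[simp]: "cscale 0 x = (0::'a::chilbert)"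
  by (metis add_cancel_right_right add.right_neutral cscale_add_left)
lemma cscale_zero_right[simp]: "cscale a (0::'a::chilbert) = 0"
  by (metis add_cancel_right_right add.right_neutral cscale_add_right)
lemma cscale_minus_right: "cscale a (- x) = - cscale a (x::'a::chilbert)"
  by (metis add.right_inverse cscale_add_right cscale_zero_right eq_neg_iff_add_eq_0)
lemma cscale_diff_right: "cscale a (x - y) = cscale a x - cscale a (y::'a::chilbert)"
  by (metis cscale_add_right cscale_minus_right diff_conv_add_uminus)
lemma cscale_minus_left: "cscale (- a) x = - cscale a (x::'a::chilbert)"
  by (metis add.right_inverse cscale_add_left cscale_zero_left eq_neg_iff_add_eq_0)
lemma cscale_of_real: "cscale (complex_of_real r) x = r *\<^sub>R (x::'a::chilbert)"
  by (simp add: scaleR_cscale)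
lemma cinner_zero_left[simp]: "cinner 0 (y::'a::chilbert) = 0"
  by (metis add_cancel_right_right add.right_neutral cinner_add_left)
lemma cinner_zero_right[simp]: "cinner (y::'a::chilbert) 0 = 0"
  by (metis cinner_commute cinner_zero_left complex_cnj_zero)
lemma cinner_add_right: "cinner x (y + z) = cinner x y + cinner x (z::'a::chilbert)"
  by (metis cinner_add_left cinner_commute complex_cnj_add)
lemma cinner_cscale_right: "cinner x (cscale a y) = cnj a * cinner x (y::'a::chilbert)"
  by (metis cinner_commute cinner_cscale_left complex_cnj_mult)
lemma cinner_minus_left: "cinner (- x) y = - cinner x (y::'a::chilbert)"
  by (metis add.right_inverse cinner_add_left cinner_zero_left eq_neg_iff_add_eq_0)
lemma cinner_minus_right: "cinner y (- x) = - cinner y (x::'a::chilbert)"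
  by (metis cinner_commute cinner_minus_left complex_cnj_minus)
lemma cinner_diff_left: "cinner (x - z) y = cinner x y - cinner z (y::'a::chilbert)"
  unfolding diff_conv_add_uminus cinner_add_left cinner_minus_left by simp
lemma cinner_diff_right: "cinner y (x - z) = cinner y x - cinner y (z::'a::chilbert)"
  unfolding diff_conv_add_uminus cinner_add_right cinner_minus_right by simp
lemma cinner_scaleR_left: "cinner (r *\<^sub>R x) y = r *\<^sub>R cinner x (y::'a::chilbert)"
  by (simp add: scaleR_cscale cinner_cscale_left scaleR_conv_of_real)
lemma cinner_scaleR_right: "cinner y (r *\<^sub>R x) = r *\<^sub>R cinner y (x::'a::chilbert)"
  by (simp add: scaleR_cscale cinner_cscale_right scaleR_conv_of_real)
lemma cinner_sum_left: "cinner (\<Sum>i\<in>F. f i) y = (\<Sum>i\<in>F. cinner (f i) (y::'a::chilbert))"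
  by (induction F rule: infinite_finite_induct) (auto simp: cinner_add_left)
lemma cinner_sum_right: "cinner y (\<Sum>i\<in>F. f i) = (\<Sum>i\<in>F. cinner y (f i::'a::chilbert))"
  by (induction F rule: infinite_finite_induct) (auto simp: cinner_add_right)
lemmas cinner_simps = cinner_add_left cinner_add_right cinner_cscale_left cinner_cscale_right
  cinner_minus_left cinner_minus_right cinner_diff_left cinner_diff_right cinner_sum_left cinner_sum_right

lemma Re_cinner_self: "Re (cinner x x) = (norm (x::'a::chilbert))\<^sup>2"
  by (simp add: cinner_self)
lemma Im_cinner_self: "Im (cinner x (x::'a::chilbert)) = 0"
  by (simp add: cinner_self)
lemma cinner_self_eq_0[simp]: "cinner x x = 0 \<longleftrightarrow> x = (0::'a::chilbert)"
  by (simp add: cinner_self)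

lemma norm_cscale: "norm (cscale a x) = cmod a * norm (x::'a::chilbert)"
proof -
  have "complex_of_real ((norm (cscale a x))\<^sup>2) = cinner (cscale a x) (cscale a x)"
    by (simp add: cinner_self)
  also have "\<dots> = a * cnj a * cinner x x" by (simp add: cinner_simps)
  also have "\<dots> = complex_of_real ((cmod a * norm x)\<^sup>2)"
    using complex_norm_square[of a] by (simp add: cinner_self power_mult_distrib)
  finally have "(norm (cscale a x))\<^sup>2 = (cmod a * norm x)\<^sup>2" using of_real_eq_iff by blast
  then show ?thesis by (simp add: power2_eq_iff_nonneg)
qed

lemma cauchy_schwarz: "cmod (cinner x y) \<le> norm x * norm (y::'a::chilbert)"
proof (cases "y = 0")
  case True then show ?thesis by simp
next
  case False
  define N where "N = (norm y)\<^sup>2"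
  define a where "a = cinner x y"
  have Npos: "N > 0" using False by (simp add: N_def)
  have "cinner (cscale (of_real N) x - cscale a y) (cscale (of_real N) x - cscale a y)
     = of_real N * of_real N * cinner x x - of_real N * cnj a * cinner x y
       - a * of_real N * cinner y x + a * cnj a * cinner y y"
    by (simp add: cinner_simps algebra_simps)
  also have "\<dots> = of_real N * (of_real N * cinner x x - a * cnj a)"
    using cinner_commute[of x y] by (simp add: a_def N_def cinner_self algebra_simps)
  also have "\<dots> = of_real (N * (N * (norm x)\<^sup>2 - (cmod a)\<^sup>2))"
    using complex_norm_square[of a] by (simp add: cinner_self)
  finally have "0 \<le> N * (N * (norm x)\<^sup>2 - (cmod a)\<^sup>2)"
    by (metis Re_cinner_self Re_complex_of_real zero_le_power2)
  then have "(cmod a)\<^sup>2 \<le> N * (norm x)\<^sup>2" using Npos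
    by (meson diff_ge_0_iff_ge zero_le_mult_iff not_less)
  moreover have "N * (norm x)\<^sup>2 = (norm x * norm y)\<^sup>2" unfolding N_def by (simp add: power_mult_distrib)
  ultimately have "(cmod a)\<^sup>2 \<le> (norm x * norm y)\<^sup>2" by linarith
  then have "cmod a \<le> norm x * norm y" by (rule power2_le_imp_le) simp
  then show ?thesis unfolding a_def .
qed

lemma bounded_bilinear_cinner: "bounded_bilinear (cinner :: 'a::chilbert \<Rightarrow> 'a \<Rightarrow> complex)"
proof (rule bounded_bilinear.intro)
  show "\<exists>K. \<forall>a b. norm (cinner a b) \<le> norm a * norm (b::'a) * K"
    by (rule exI[of _ 1]) (simp add: cauchy_schwarz)
qed (simp_all only: cinner_add_left cinner_add_right cinner_scaleR_left cinner_scaleR_right)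

lemma bounded_linear_cscale: "bounded_linear (cscale a :: 'a::chilbert \<Rightarrow> 'a)"
proof (rule bounded_linear_intro[where K="cmod a"])
  fix x y :: 'a
  show "cscale a (x + y) = cscale a x + cscale a y" by (rule cscale_add_right)
  fix r :: real
  show "cscale a (r *\<^sub>R x) = r *\<^sub>R cscale a x"
    unfolding scaleR_cscale[of r] cscale_cscale by (simp only: mult.commute)
  show "norm (cscale a x) \<le> norm x * cmod a" by (simp add: norm_cscale mult.commute)
qed



instantiation prod :: (chilbert, chilbert) chilbert
begin
definition cscale_prod_def: "cscale a x = (cscale a (fst x), cscale a (snd x))"
definition cinner_prod_def: "cinner x y = cinner (fst x) (fst y) + cinner (snd x) (snd y)"
instance
proof
  fix a b :: complex and x y z :: "'a \<times> 'b" and r :: real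
  show "cscale a (x + y) = cscale a x + cscale a y"
    by (simp add: cscale_prod_def cscale_add_right)
  show "cscale (a + b) x = cscale a x + cscale b x"
    by (simp add: cscale_prod_def cscale_add_left)
  show "cscale a (cscale b x) = cscale (a * b) x"
    by (simp add: cscale_prod_def cscale_cscale)
  show "cscale 1 x = x"
    by (simp add: cscale_prod_def cscale_one)
  show "r *\<^sub>R x = cscale (complex_of_real r) x"
    by (simp add: cscale_prod_def scaleR_cscale[symmetric] scaleR_prod_def)
  show "cinner (x + y) z = cinner x z + cinner y z"
    by (simp add: cinner_prod_def cinner_add_left)
  show "cinner (cscale a x) y = a * cinner x y"
    by (simp add: cinner_prod_def cscale_prod_def cinner_cscale_left algebra_simps)
  show "cinner y x = cnj (cinner x y)"
    by (simp add: cinner_prod_def cinner_commute[of "fst x"] cinner_commute[of "snd x"])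
  show "cinner x x = complex_of_real ((norm x)\<^sup>2)"
    by (simp add: cinner_prod_def cinner_self norm_prod_def)
qed
end

lemma cinner_Pair: "cinner (a, b) (c, d) = cinner a c + cinner b d"
  by (simp add: cinner_prod_def)

lemma csubspace_closure:
  fixes S :: "'a::chilbert set"
  assumes "csubspace S" shows "csubspace (closure S)"
  unfolding csubspace_def
proof (intro conjI ballI allI impI)
  show "0 \<in> closure S" using assms closure_subset unfolding csubspace_def by blast
next
  fix x y assume "x \<in> closure S" "y \<in> closure S"
  then obtain f g where f: "\<forall>n. f n \<in> S" "f \<longlonglongrightarrow> x" and g: "\<forall>n. g n \<in> S" "g \<longlonglongrightarrow> y"
    unfolding closure_sequential by blast
  have "(\<lambda>n. f n + g n) \<longlonglongrightarrow> x + y" using f g by (intro tendsto_intros)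
  moreover have "\<forall>n. f n + g n \<in> S" using f g assms unfolding csubspace_def by blast
  ultimately show "x + y \<in> closure S" unfolding closure_sequential
    by (intro exI[where x="\<lambda>n. f n + g n"]) simp
next
  fix a x assume "x \<in> closure S"
  then obtain f where f: "\<forall>n. f n \<in> S" "f \<longlonglongrightarrow> x"
    unfolding closure_sequential by blast
  have "(\<lambda>n. cscale a (f n)) \<longlonglongrightarrow> cscale a x"
    using bounded_linear.tendsto[OF bounded_linear_cscale f(2)] .
  moreover have "\<forall>n. cscale a (f n) \<in> S" using f assms unfolding csubspace_def by blast
  ultimately show "cscale a x \<in> closure S" unfolding closure_sequential
    by (intro exI[where x="\<lambda>n. cscale a (f n)"]) simp
qed

lemma parallelogram:
  "(norm (u + v))\<^sup>2 + (norm (u - v))\<^sup>2 = 2 * (norm u)\<^sup>2 + 2 * (norm (v::'a::chilbert))\<^sup>2"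
  unfolding Re_cinner_self[symmetric] by (simp add: cinner_simps)

lemma norm_diff_sq:
  "(norm (z - t *\<^sub>R w))\<^sup>2 = (norm z)\<^sup>2 - 2 * t * Re (cinner z w) + t\<^sup>2 * (norm (w::'a::chilbert))\<^sup>2"
proof -
  have "Re (cinner w z) = Re (cinner z w)" by (subst cinner_commute) simp
  then show ?thesis
    unfolding Re_cinner_self[symmetric]
    by (simp add: cinner_simps cinner_scaleR_left cinner_scaleR_right scaleR_conv_of_real power2_eq_square algebra_simps)
qed

lemma quad_nonneg_zero:
  fixes a b :: real
  assumes "a \<ge> 0" "\<And>t. 0 \<le> t\<^sup>2 * a - 2 * t * b"
  shows "b = 0"
proof (cases "a = 0")
  case True
  then show ?thesis using assms(2)[of b] by (auto simp: mult_le_0_iff)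
next
  case False
  then have "a > 0" using assms(1) by simp
  have "0 \<le> (b / a)\<^sup>2 * a - 2 * (b / a) * b" by (rule assms(2))
  also have "\<dots> = - (b\<^sup>2 / a)" using \<open>a > 0\<close> by (simp add: power2_eq_square field_simps)
  finally have "b\<^sup>2 / a \<le> 0" by simp
  then have "b\<^sup>2 \<le> 0" using \<open>a > 0\<close> by (simp add: divide_le_0_iff)
  then show ?thesis by simp
qed

lemma projection_exists:
  fixes M :: "'a::chilbert set"
  assumes sub: "csubspace M" and cl: "closed M"
  shows "\<exists>m\<in>M. \<forall>u\<in>M. cinner (p - m) u = 0"
proof -
  have M0: "0 \<in> M" and Madd: "\<And>x y. x \<in> M \<Longrightarrow> y \<in> M \<Longrightarrow> x + y \<in> M"
    and Msc: "\<And>a x. x \<in> M \<Longrightarrow> cscale a x \<in> M"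
    using sub unfolding csubspace_def by auto
  have MR: "\<And>r x. x \<in> M \<Longrightarrow> r *\<^sub>R x \<in> M" by (simp add: scaleR_cscale Msc)
  have Mdiff: "\<And>x y. x \<in> M \<Longrightarrow> y \<in> M \<Longrightarrow> x - y \<in> M"
    using Madd MR[of _ "-1"] by (metis diff_conv_add_uminus scaleR_minus1_left)
  define X where "X = (\<lambda>m. (norm (p - m))\<^sup>2) ` M"
  define d where "d = Inf X"
  have Xne: "X \<noteq> {}" using M0 X_def by blast
  have bdd: "bdd_below X" unfolding X_def by (rule bdd_belowI[of _ 0]) auto
  have low: "\<And>m. m \<in> M \<Longrightarrow> d \<le> (norm (p - m))\<^sup>2"
    unfolding d_def X_def by (rule cInf_lower) (use bdd X_def in auto)
  have "\<forall>n. \<exists>m\<in>M. (norm (p - m))\<^sup>2 < d + inverse (real (Suc n))"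
  proof
    fix n
    have "Inf X < d + inverse (real (Suc n))" unfolding d_def by simp
    from cInf_lessD[OF Xne this] show "\<exists>m\<in>M. (norm (p - m))\<^sup>2 < d + inverse (real (Suc n))"
      unfolding X_def by blast
  qed
  then obtain f where fM: "\<And>n. f n \<in> M"
    and fd: "\<And>n. (norm (p - f n))\<^sup>2 < d + inverse (real (Suc n))"
    by metis
  have bound: "(norm (f n - f k))\<^sup>2 \<le> 2 * inverse (real (Suc n)) + 2 * inverse (real (Suc k))" for n k
  proof -
    define mid where "mid = (1/2) *\<^sub>R (f n + f k)"
    have "mid \<in> M" unfolding mid_def using fM Madd MR by blast
    then have "d \<le> (norm (p - mid))\<^sup>2" by (rule low)
    have e1: "(p - f n) + (p - f k) = 2 *\<^sub>R (p - mid)" unfolding mid_def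
      by (simp add: algebra_simps scaleR_2)
    have e2: "(p - f n) - (p - f k) = f k - f n" by simp
    have "(norm (2 *\<^sub>R (p - mid)))\<^sup>2 = 4 * (norm (p - mid))\<^sup>2"
      by (simp add: power2_eq_square)
    with parallelogram[of "p - f n" "p - f k"] e1 e2
    have "(norm (f k - f n))\<^sup>2 = 2 * (norm (p - f n))\<^sup>2 + 2 * (norm (p - f k))\<^sup>2 - 4 * (norm (p - mid))\<^sup>2"
      by simp
    with fd[of n] fd[of k] \<open>d \<le> _\<close> show ?thesis by (simp add: norm_minus_commute)
  qed
  have "Cauchy f"
  proof (rule CauchyI)
    fix e :: real assume "e > 0"
    then have "e\<^sup>2 > 0" by simp
    obtain N :: nat where N: "inverse (real (Suc N)) < e\<^sup>2 / 4"
      using reals_Archimedean[of "e\<^sup>2/4"] \<open>e\<^sup>2 > 0\<close> by auto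
    show "\<exists>M. \<forall>m\<ge>M. \<forall>n\<ge>M. norm (f m - f n) < e"
    proof (intro exI allI impI)
      fix m n assume "N \<le> m" "N \<le> n"
      have "inverse (real (Suc m)) \<le> inverse (real (Suc N))"
        using \<open>N \<le> m\<close> by (simp add: le_imp_inverse_le)
      moreover have "inverse (real (Suc n)) \<le> inverse (real (Suc N))"
        using \<open>N \<le> n\<close> by (simp add: le_imp_inverse_le)
      ultimately have "(norm (f m - f n))\<^sup>2 < e\<^sup>2" using bound[of m n] N by linarith
      then show "norm (f m - f n) < e" using \<open>e > 0\<close> by (simp add: power_less_imp_less_base)
    qed
  qed
  then obtain m where fm: "f \<longlonglongrightarrow> m" using Cauchy_convergent_iff convergent_def by blast
  have mM: "m \<in> M" using closed_sequentially[OF cl] fM fm by blast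
  have "(\<lambda>n. (norm (p - f n))\<^sup>2) \<longlonglongrightarrow> (norm (p - m))\<^sup>2" using fm by (intro tendsto_intros)
  moreover have "(\<lambda>n. d + inverse (real (Suc n))) \<longlonglongrightarrow> d + 0"
    by (intro tendsto_intros LIMSEQ_inverse_real_of_nat)
  ultimately have "(norm (p - m))\<^sup>2 \<le> d + 0"
    by (rule LIMSEQ_le) (use fd less_imp_le in blast)
  then have minim: "\<And>u. u \<in> M \<Longrightarrow> (norm (p - m))\<^sup>2 \<le> (norm (p - u))\<^sup>2"
    using low by (metis add_0_right order_trans)
  define z where "z = p - m"
  have Re0: "Re (cinner z w) = 0" if "w \<in> M" for w
  proof (rule quad_nonneg_zero[of "(norm w)\<^sup>2"])
    fix t :: real
    have "m + t *\<^sub>R w \<in> M" using that mM Madd MR by blast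
    from minim[OF this] have "(norm z)\<^sup>2 \<le> (norm (z - t *\<^sub>R w))\<^sup>2"
      unfolding z_def by (simp add: algebra_simps)
    then show "0 \<le> t\<^sup>2 * (norm w)\<^sup>2 - 2 * t * Re (cinner z w)"
      unfolding norm_diff_sq by simp
  qed simp
  have "cinner z w = 0" if "w \<in> M" for w
  proof -
    have "Re (cinner z (cscale \<i> w)) = 0" using Re0 Msc that by blast
    then have "Im (cinner z w) = 0" by (simp add: cinner_cscale_right)
    with Re0[OF that] show ?thesis by (simp add: complex_eq_iff)
  qed
  then show ?thesis using mM z_def by blast
qed



definition orthonormal :: "(nat \<Rightarrow> 'a::chilbert) \<Rightarrow> bool" where
  "orthonormal e \<longleftrightarrow> (\<forall>n m. cinner (e n) (e m) = (if n = m then 1 else 0))"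

lemma cinner_cnj_self: "cnj a * a = complex_of_real ((cmod a)\<^sup>2)"
  using complex_norm_square[of a] by (simp add: mult.commute)
lemma cinner_cnj_self2: "a * cnj a = complex_of_real ((cmod a)\<^sup>2)"
  using complex_norm_square[of a] by simp

lemma pyth:
  assumes "orthonormal e" "finite F"
  shows "cinner (\<Sum>n\<in>F. cscale (a n) (e n)) (\<Sum>n\<in>F. cscale (a n) (e n))
       = complex_of_real (\<Sum>n\<in>F. (cmod (a n))\<^sup>2)"
proof -
  have "cinner (\<Sum>n\<in>F. cscale (a n) (e n)) (\<Sum>n\<in>F. cscale (a n) (e n))
      = (\<Sum>i\<in>F. \<Sum>j\<in>F. cnj (a i) * (a j * cinner (e j) (e i)))"
    by (simp add: cinner_simps sum_distrib_left)
  also have "\<dots> = (\<Sum>i\<in>F. cnj (a i) * a i)"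
  proof -
    have oe: "\<And>i j. cinner (e j) (e i) = (if j = i then 1 else 0)"
      using assms(1) unfolding orthonormal_def by blast
    show ?thesis using assms(2) by (simp add: oe if_distrib sum.delta sum.delta' cong: if_cong)
  qed
  also have "\<dots> = complex_of_real (\<Sum>n\<in>F. (cmod (a n))\<^sup>2)"
    by (simp add: cinner_cnj_self of_real_sum)
  finally show ?thesis .
qed

lemma norm_sq_sum:
  assumes "orthonormal e" "finite F"
  shows "(norm (\<Sum>n\<in>F. cscale (a n) (e n)))\<^sup>2 = (\<Sum>n\<in>F. (cmod (a n))\<^sup>2)"
  using pyth[OF assms, of a] unfolding Re_cinner_self[symmetric] by simp

lemma bessel_partial:
  assumes "orthonormal e"
  shows "(\<Sum>n<N. (cmod (cinner x (e n)))\<^sup>2) \<le> (norm x)\<^sup>2"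
proof -
  define c where "c n = cinner x (e n)" for n
  define s where "s = (\<Sum>n<N. cscale (c n) (e n))"
  define P where "P = (\<Sum>n<N. (cmod (c n))\<^sup>2)"
  have xs: "cinner x s = complex_of_real P"
    unfolding s_def P_def by (simp add: cinner_simps c_def cinner_cnj_self cinner_cnj_self2 of_real_sum)
  have sx: "cinner s x = complex_of_real P"
    using xs by (subst cinner_commute) simp
  have ss: "cinner s s = complex_of_real P"
    unfolding s_def P_def by (rule pyth[OF assms]) simp
  have "0 \<le> (norm (x - s))\<^sup>2" by simp
  also have "\<dots> = (norm x)\<^sup>2 - P"
    unfolding Re_cinner_self[symmetric] by (simp add: cinner_simps xs sx ss)
  finally show ?thesis unfolding P_def c_def by simp
qed

lemma bessel:
  assumes "orthonormal e"
  shows "summable (\<lambda>n. (cmod (cinner x (e n)))\<^sup>2)"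
  by (rule summableI_nonneg_bounded[where x="(norm x)\<^sup>2"]) (simp_all add: bessel_partial[OF assms])

lemma onb_expansion:
  assumes on: "orthonormal e" and tot: "\<forall>x. (\<forall>n. cinner x (e n) = 0) \<longrightarrow> x = 0"
  shows "(\<lambda>n. cscale (cinner x (e n)) (e n)) sums x"
proof -
  define c where "c n = cinner x (e n)" for n
  define s where "s N = (\<Sum>n<N. cscale (c n) (e n))" for N
  define P where "P N = (\<Sum>n<N. (cmod (c n))\<^sup>2)" for N
  have "convergent P" unfolding P_def c_def using bessel[OF on, of x]
    by (simp add: summable_iff_convergent)
  then have CP: "Cauchy P" by (rule convergent_Cauchy)
  have diff: "(norm (s M - s N))\<^sup>2 = P M - P N" if "N \<le> M" for M N
  proof -
    have "s M - s N = (\<Sum>n\<in>{N..<M}. cscale (c n) (e n))"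
      unfolding s_def using sum_diff_nat_ivl[of 0 N M] that by (simp add: atLeast0LessThan)
    moreover have "P M - P N = (\<Sum>n\<in>{N..<M}. (cmod (c n))\<^sup>2)"
      unfolding P_def using sum_diff_nat_ivl[of 0 N M] that by (simp add: atLeast0LessThan)
    ultimately show ?thesis using norm_sq_sum[OF on] by simp
  qed
  have "Cauchy s"
  proof (rule CauchyI)
    fix r :: real assume "r > 0"
    then have "r\<^sup>2 > 0" by simp
    from CP[unfolded Cauchy_def] this obtain K where K: "\<forall>m\<ge>K. \<forall>n\<ge>K. dist (P m) (P n) < r\<^sup>2"
      by blast
    show "\<exists>M. \<forall>m\<ge>M. \<forall>n\<ge>M. norm (s m - s n) < r"
    proof (intro exI allI impI)
      fix m n assume "K \<le> m" "K \<le> n"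
      then have d: "\<bar>P m - P n\<bar> < r\<^sup>2" using K by (simp add: dist_real_def)
      have "(norm (s m - s n))\<^sup>2 < r\<^sup>2"
      proof (cases "n \<le> m")
        case True then show ?thesis using diff[OF True] d by simp
      next
        case False then have "m \<le> n" by simp
        then show ?thesis using diff[OF \<open>m \<le> n\<close>] d by (simp add: norm_minus_commute)
      qed
      then show "norm (s m - s n) < r" using \<open>r > 0\<close> by (simp add: power_less_imp_less_base)
    qed
  qed
  then obtain y where sy: "s \<longlonglongrightarrow> y" using Cauchy_convergent_iff convergent_def by blast
  have "cinner (x - y) (e m) = 0" for m
  proof -
    have "(\<lambda>N. cinner (s N) (e m)) \<longlonglongrightarrow> cinner y (e m)"
      using bounded_bilinear.tendsto[OF bounded_bilinear_cinner sy tendsto_const] .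
    moreover have "(\<lambda>N. cinner (s N) (e m)) \<longlonglongrightarrow> c m"
    proof (rule tendsto_eventually)
      have "cinner (s N) (e m) = c m" if "N \<ge> Suc m" for N
      proof -
        have "cinner (s N) (e m) = (\<Sum>n<N. c n * (if n = m then 1 else 0))"
        proof -
          have oe: "\<And>i j. cinner (e j) (e i) = (if j = i then 1 else 0)"
            using on unfolding orthonormal_def by blast
          show ?thesis unfolding s_def by (simp add: cinner_simps oe)
        qed
        also have "\<dots> = c m" using that by (simp add: if_distrib sum.delta cong: if_cong)
        finally show ?thesis .
      qed
      then show "\<forall>\<^sub>F N in sequentially. cinner (s N) (e m) = c m"
        unfolding eventually_sequentially by blast
    qed
    ultimately have "cinner y (e m) = c m" using LIMSEQ_unique by blast
    then show ?thesis by (simp add: cinner_diff_left c_def)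
  qed
  with tot have "x - y = 0" by blast
  then have "x = y" by simp
  have "s = (\<lambda>N. \<Sum>n<N. cscale (cinner x (e n)) (e n))" unfolding s_def c_def by (rule ext) simp
  then show ?thesis unfolding sums_def using sy \<open>x = y\<close> by simp
qed

lemma parseval:
  assumes on: "orthonormal e" and tot: "\<forall>x. (\<forall>n. cinner x (e n) = 0) \<longrightarrow> x = 0"
  shows "(\<lambda>k. cinner a (e k) * cinner (e k) b) sums cinner a b"
proof -
  have "(\<lambda>N. \<Sum>n<N. cscale (cinner a (e n)) (e n)) \<longlonglongrightarrow> a"
    using onb_expansion[OF on tot, of a] unfolding sums_def .
  from bounded_bilinear.tendsto[OF bounded_bilinear_cinner this tendsto_const[of b]]
  show ?thesis unfolding sums_def by (simp add: cinner_simps)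
qed



lemma csubspace_sum:
  assumes "csubspace S" "finite F" "\<And>a. a \<in> F \<Longrightarrow> f a \<in> S"
  shows "sum f F \<in> S"
  using assms(2,3)
proof (induction F rule: finite_induct)
  case empty then show ?case using assms(1) unfolding csubspace_def by simp
next
  case (insert x F) then show ?case using assms(1) unfolding csubspace_def by simp
qed

lemma cspan_sub:
  assumes "csubspace S" "A \<subseteq> S"
  shows "cspan A \<subseteq> S"
proof
  fix x assume "x \<in> cspan A"
  then obtain F c where F: "finite F" "F \<subseteq> A" "x = (\<Sum>a\<in>F. cscale (c a) a)"
    unfolding cspan_def by blast
  show "x \<in> S" unfolding F(3)
  proof (rule csubspace_sum[OF assms(1) F(1)])
    fix a assume "a \<in> F"
    then have "a \<in> S" using F(2) assms(2) by blast
    then show "cscale (c a) a \<in> S" using assms(1) unfolding csubspace_def by blast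
  qed
qed

lemma T_op_mem: "(a, b) \<in> T_op e xs \<longleftrightarrow> a \<in> Dseq xs \<and> b = (\<Sum>n. cscale (cinner a (xs n)) (e n))"
  unfolding T_op_def by blast

theorem proposition3p4:
  fixes \<phi> \<psi> e :: "nat \<Rightarrow> 'a::chilbert" and T :: "('a \<times> 'a) set"
  assumes "constructing_pair e T \<phi>"
    and "\<And>n. (e n, \<psi> n) \<in> adj_op (inv_op T)"
  shows "quasi_basis (dom_op (adj_op T)) (dom_op (inv_op T)) \<phi> \<psi>
    \<and> T = inv_op (restrict_op (T_op e \<psi>) (dom_op (inv_op T)))
    \<and> adj_op (inv_op T) = inv_op (restrict_op (T_op e \<phi>) (dom_op (adj_op T)))"
proof -
  note cp = assms(1) and psi = assms(2)
  from cp have onb: "ONB e" and lin: "lin_op T" and clT: "closed T"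
    and dinv: "closure (Range T) = UNIV" and eT: "\<And>n. (e n, \<phi> n) \<in> T"
    unfolding constructing_pair_def closed_op_def densely_defined_def dom_op_def inv_op_def
    by auto
  have on: "orthonormal e" and tot: "\<forall>x. (\<forall>n. cinner x (e n) = 0) \<longrightarrow> x = 0"
    using onb unfolding ONB_def orthonormal_def by auto
  have T0: "(0, 0) \<in> T"
    and Tadd: "\<And>x y u v. (x, y) \<in> T \<Longrightarrow> (u, v) \<in> T \<Longrightarrow> (x + u, y + v) \<in> T"
    and Tsc: "\<And>a x y. (x, y) \<in> T \<Longrightarrow> (cscale a x, cscale a y) \<in> T"
    and Tfun: "\<And>x y z. (x, y) \<in> T \<Longrightarrow> (x, z) \<in> T \<Longrightarrow> y = z"
    using lin unfolding lin_op_def by blast+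
  have adjT: "\<And>y z. (y, z) \<in> adj_op T \<longleftrightarrow> (\<forall>x w. (x, w) \<in> T \<longrightarrow> cinner w y = cinner x z)"
    by (simp add: adj_op_def)
  have adjinv: "adj_op (inv_op T) = converse (adj_op T)"
    by (auto simp: adj_op_def inv_op_def)
  have F1: "\<And>a b n. (a, b) \<in> T \<Longrightarrow> cinner b (\<psi> n) = cinner a (e n)"
  proof -
    fix a b n assume "(a, b) \<in> T"
    with psi[of n] show "cinner b (\<psi> n) = cinner a (e n)"
      unfolding adj_op_def inv_op_def by auto
  qed
  have F2: "\<And>y z n. (y, z) \<in> adj_op T \<Longrightarrow> cinner y (\<phi> n) = cinner z (e n)"
  proof -
    fix y z n assume "(y, z) \<in> adj_op T"
    with eT[of n] have "cinner (\<phi> n) y = cinner (e n) z" unfolding adjT by blast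
    then show "cinner y (\<phi> n) = cinner z (e n)"
      by (metis cinner_commute)
  qed
  have psiT: "\<And>n. (\<psi> n, e n) \<in> adj_op T" using psi adjinv by auto
  have domadj_sub: "csubspace (Domain (adj_op T))"
    unfolding csubspace_def
  proof (intro conjI ballI allI impI)
    show "0 \<in> Domain (adj_op T)" by (rule DomainI[of _ 0]) (simp add: adjT)
  next
    fix y1 y2 assume "y1 \<in> Domain (adj_op T)" "y2 \<in> Domain (adj_op T)"
    then obtain z1 z2 where "(y1, z1) \<in> adj_op T" "(y2, z2) \<in> adj_op T" by blast
    then have "(y1 + y2, z1 + z2) \<in> adj_op T" unfolding adjT by (simp add: cinner_add_right)
    then show "y1 + y2 \<in> Domain (adj_op T)" by blast
  next
    fix a y assume "y \<in> Domain (adj_op T)"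
    then obtain z where "(y, z) \<in> adj_op T" by blast
    then have "(cscale a y, cscale a z) \<in> adj_op T" unfolding adjT by (simp add: cinner_cscale_right)
    then show "cscale a y \<in> Domain (adj_op T)" by blast
  qed
  have ran_sub: "csubspace (Range T)"
    unfolding csubspace_def
  proof (intro conjI ballI allI impI)
    show "0 \<in> Range T" using T0 by blast
  next
    fix y1 y2 assume "y1 \<in> Range T" "y2 \<in> Range T"
    then obtain x1 x2 where "(x1, y1) \<in> T" "(x2, y2) \<in> T" by blast
    then show "y1 + y2 \<in> Range T" using Tadd by blast
  next
    fix a y assume "y \<in> Range T"
    then obtain x where "(x, y) \<in> T" by blast
    then show "cscale a y \<in> Range T" using Tsc by blast
  qed
  have Tsubspace: "csubspace T"
    unfolding csubspace_def
  proof (intro conjI ballI allI impI)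
    show "0 \<in> T" using T0 by (simp add: zero_prod_def)
  next
    fix p q assume "p \<in> T" "q \<in> T"
    then show "p + q \<in> T" using Tadd[of "fst p" "snd p" "fst q" "snd q"] by (simp add: plus_prod_def)
  next
    fix a p assume "p \<in> T"
    then show "cscale a p \<in> T" using Tsc[of "fst p" "snd p" a] by (simp add: cscale_prod_def)
  qed
  have orth0: "z = 0" if zo: "\<forall>v\<in>Domain (adj_op T). cinner z v = 0" for z
  proof -
    obtain m where mT: "m \<in> T" and mo: "\<forall>u\<in>T. cinner ((0, z) - m) u = 0"
      using projection_exists[OF Tsubspace clT, of "(0, z)"] by blast
    obtain x w where m: "m = (x, w)" by (cases m)
    have eq: "cinner (- x) u + cinner (z - w) v = 0" if "(u, v) \<in> T" for u v
      using mo that m by (auto simp: cinner_Pair)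
    have "(z - w, x) \<in> adj_op T" unfolding adjT
    proof (intro allI impI)
      fix u v assume "(u, v) \<in> T"
      from eq[OF this] have "cinner (z - w) v = cinner x u" by (simp add: cinner_minus_left)
      then show "cinner v (z - w) = cinner u x" by (metis cinner_commute)
    qed
    then have zz: "cinner z (z - w) = 0" using zo by blast
    have xw: "cinner x x = cinner (z - w) w" using eq[of x w] mT m by (simp add: cinner_minus_left)
    have "cinner x x + cinner (z - w) (z - w) = cinner (z - w) z"
      using xw by (simp add: cinner_diff_right)
    also have "\<dots> = 0" using zz by (subst cinner_commute) simp
    finally have "(norm x)\<^sup>2 + (norm (z - w))\<^sup>2 = 0"
      by (metis Re_cinner_self plus_complex.sel(1) zero_complex.sel(1))
    then have "x = 0" "z = w" by (simp_all add: add_nonneg_eq_0_iff)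
    with mT m T0 Tfun show "z = 0" by blast
  qed
  have dense_adj: "closure (Domain (adj_op T)) = UNIV"
  proof -
    have "y \<in> closure (Domain (adj_op T))" for y
    proof -
      obtain m where mM: "m \<in> closure (Domain (adj_op T))"
        and mo: "\<forall>u\<in>closure (Domain (adj_op T)). cinner (y - m) u = 0"
        using projection_exists[OF csubspace_closure[OF domadj_sub] closed_closure, of y] by blast
      have "y - m = 0" using mo closure_subset by (intro orth0) blast
      then show ?thesis using mM by simp
    qed
    then show ?thesis by blast
  qed
  have QB: "quasi_basis (Domain (adj_op T)) (Range T) \<phi> \<psi>"
    unfolding quasi_basis_def
  proof (intro conjI)
    show "biorthogonal \<phi> \<psi>" unfolding biorthogonal_def
      using F1[OF eT] on unfolding orthonormal_def by simp
    show "dense_csubspace (Domain (adj_op T))" unfolding dense_csubspace_def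
      using domadj_sub dense_adj by blast
    show "dense_csubspace (Range T)" unfolding dense_csubspace_def
      using ran_sub dinv by blast
    show "Dspan \<psi> \<subseteq> Domain (adj_op T)" unfolding Dspan_def
      by (rule cspan_sub[OF domadj_sub]) (use psiT in blast)
    show "Domain (adj_op T) \<subseteq> Dseq \<phi>"
    proof
      fix y assume "y \<in> Domain (adj_op T)"
      then obtain z where "(y, z) \<in> adj_op T" by blast
      then show "y \<in> Dseq \<phi>" unfolding Dseq_def using F2 bessel[OF on, of z] by simp
    qed
    show "Dspan \<phi> \<subseteq> Range T" unfolding Dspan_def
      by (rule cspan_sub[OF ran_sub]) (use eT in blast)
    show "Range T \<subseteq> Dseq \<psi>"
    proof
      fix y assume "y \<in> Range T"
      then obtain x where "(x, y) \<in> T" by blast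
      then show "y \<in> Dseq \<psi>" unfolding Dseq_def using F1 bessel[OF on, of x] by simp
    qed
    show "\<forall>x\<in>Domain (adj_op T). \<forall>y\<in>Range T.
            (\<lambda>k. cinner x (\<phi> k) * cinner (\<psi> k) y) sums cinner x y"
    proof (intro ballI)
      fix x y assume "x \<in> Domain (adj_op T)" "y \<in> Range T"
      then obtain z w where xz: "(x, z) \<in> adj_op T" and wy: "(w, y) \<in> T" by blast
      have a: "cinner x (\<phi> k) = cinner z (e k)" for k using F2[OF xz] .
      have b: "cinner (\<psi> k) y = cinner (e k) w" for k
        using F1[OF wy, of k] by (metis cinner_commute)
      have c: "cinner x y = cinner z w"
        using xz wy unfolding adjT by (metis cinner_commute)
      show "(\<lambda>k. cinner x (\<phi> k) * cinner (\<psi> k) y) sums cinner x y"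
        unfolding a b c by (rule parseval[OF on tot])
    qed
  qed
  have exp: "\<And>x. (\<Sum>n. cscale (cinner x (e n)) (e n)) = x"
    using onb_expansion[OF on tot] sums_unique by metis
  have PB: "T = converse (restrict_op (T_op e \<psi>) (Range T))"
  proof (rule set_eqI)
    fix p :: "'a \<times> 'a"
    obtain x y where p: "p = (x, y)" by (cases p)
    have "(x, y) \<in> T \<longleftrightarrow> (y \<in> Dseq \<psi> \<and> x = (\<Sum>n. cscale (cinner y (\<psi> n)) (e n))) \<and> y \<in> Range T"
    proof
      assume xy: "(x, y) \<in> T"
      have "y \<in> Dseq \<psi>" unfolding Dseq_def using F1[OF xy] bessel[OF on, of x] by simp
      moreover have "(\<Sum>n. cscale (cinner y (\<psi> n)) (e n)) = x" using F1[OF xy] exp by simp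
      ultimately show "(y \<in> Dseq \<psi> \<and> x = (\<Sum>n. cscale (cinner y (\<psi> n)) (e n))) \<and> y \<in> Range T"
        using xy by auto
    next
      assume h: "(y \<in> Dseq \<psi> \<and> x = (\<Sum>n. cscale (cinner y (\<psi> n)) (e n))) \<and> y \<in> Range T"
      then obtain x' where x'y: "(x', y) \<in> T" by blast
      have "(\<Sum>n. cscale (cinner y (\<psi> n)) (e n)) = x'" using F1[OF x'y] exp by simp
      with h x'y show "(x, y) \<in> T" by simp
    qed
    then show "p \<in> T \<longleftrightarrow> p \<in> converse (restrict_op (T_op e \<psi>) (Range T))"
      unfolding p restrict_op_def by (simp add: T_op_mem)
  qed
  have PC: "converse (adj_op T) = converse (restrict_op (T_op e \<phi>) (Domain (adj_op T)))"
  proof (rule set_eqI)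
    fix p :: "'a \<times> 'a"
    obtain a b where p: "p = (a, b)" by (cases p)
    have "(b, a) \<in> adj_op T \<longleftrightarrow> (b \<in> Dseq \<phi> \<and> a = (\<Sum>n. cscale (cinner b (\<phi> n)) (e n))) \<and> b \<in> Domain (adj_op T)"
    proof
      assume ba: "(b, a) \<in> adj_op T"
      have "b \<in> Dseq \<phi>" unfolding Dseq_def using F2[OF ba] bessel[OF on, of a] by simp
      moreover have "(\<Sum>n. cscale (cinner b (\<phi> n)) (e n)) = a" using F2[OF ba] exp by simp
      ultimately show "(b \<in> Dseq \<phi> \<and> a = (\<Sum>n. cscale (cinner b (\<phi> n)) (e n))) \<and> b \<in> Domain (adj_op T)"
        using ba by auto
    next
      assume h: "(b \<in> Dseq \<phi> \<and> a = (\<Sum>n. cscale (cinner b (\<phi> n)) (e n))) \<and> b \<in> Domain (adj_op T)"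
      then obtain a' where ba': "(b, a') \<in> adj_op T" by blast
      have "(\<Sum>n. cscale (cinner b (\<phi> n)) (e n)) = a'" using F2[OF ba'] exp by simp
      with h ba' show "(b, a) \<in> adj_op T" by simp
    qed
    then show "p \<in> converse (adj_op T) \<longleftrightarrow> p \<in> converse (restrict_op (T_op e \<phi>) (Domain (adj_op T)))"
      unfolding p restrict_op_def by (simp add: T_op_mem)
  qed
  show ?thesis
    unfolding dom_op_def inv_op_def Domain_converse
    using QB PB PC adjinv unfolding inv_op_def by simp
qed


end
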